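(* Let $a,b$ be integers with $0<b<a$, let $S=\langle a,a+1,\ldots,a+b\rangle$ with conductor $c$, and let $m\ge 2c-1$. If $M$ is an $(S,m,r)$-amenable set, then $M+1=\{x+1\mid x\in M\}$ is an $(S,m+1,r)$-amenable set.
   Context: For $x\in S$, $\mathrm D(x)=\{\alpha\in S\mid x-\alpha\in S\}$. The conductor $c$ is the least element of $S$ with $c+n\in S$ for all $n\in\mathbb N$. For $m\ge 2c-1$, a set $M=\{m_1<\cdots<m_r\}\subseteq S$ with $m=m_1$ is $(S,m,r)$-amenable if $\mathrm D(m_i)\cap[m,\infty)\subseteq M$ for all $i$. *)

theory Defs
  imports Main
begin

inductive_set semigroup_gen :: "nat set \<Rightarrow> nat set" for G :: "nat set" where
  zero: "0 \<in> semigroup_gen G"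
| add: "x \<in> semigroup_gen G \<Longrightarrow> g \<in> G \<Longrightarrow> x + g \<in> semigroup_gen G"

definition conductor :: "nat set \<Rightarrow> nat" where
  "conductor S = (LEAST c. c \<in> S \<and> (\<forall>n. c + n \<in> S))"

text \<open>D(x) = {alpha in S | x - alpha in S} (difference taken in the integers).\<close>
definition Dset :: "nat set \<Rightarrow> nat \<Rightarrow> nat set" where
  "Dset S x = {\<alpha> \<in> S. \<alpha> \<le> x \<and> x - \<alpha> \<in> S}"

definition amenable :: "nat set \<Rightarrow> nat \<Rightarrow> nat \<Rightarrow> nat set \<Rightarrow> bool" where
  "amenable S m r M \<longleftrightarrow>
     2 * conductor S - 1 \<le> m \<and> finite M \<and> card M = r \<and> M \<subseteq> S \<and>
     m \<in> M \<and> (\<forall>x\<in>M. m \<le> x) \<and>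
     (\<forall>x\<in>M. Dset S x \<inter> {m..} \<subseteq> M)"

end

theory Submission
  imports Defs
begin

lemma gen_mem:
  fixes a b :: nat
  shows "j \<le> k * b \<Longrightarrow> k * a + j \<in> semigroup_gen {a..a+b}"
proof (induction k arbitrary: j)
  case 0
  then show ?case by (simp add: semigroup_gen.zero)
next
  case (Suc k)
  define j' where "j' = min j (k*b)"
  have 1: "k * a + j' \<in> semigroup_gen {a..a+b}" using Suc.IH j'_def by simp
  have 2: "a + (j - j') \<in> {a..a+b}" using Suc.prems j'_def by auto
  have "k * a + j' + (a + (j - j')) = Suc k * a + j" using j'_def by auto
  then show ?case using semigroup_gen.add[OF 1 2] by metis
qed

lemma big_mem:
  fixes a b :: nat
  assumes "0 < b" "n \<ge> a * a"
  shows "n \<in> semigroup_gen {a..a+b}"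
proof (cases "a = 0")
  case True
  have "n \<le> n * b" using assms(1) by simp
  then show ?thesis using gen_mem[of n n b 0] True by simp
next
  case False
  have "n div a \<ge> a" using assms(2) False
    by (metis div_le_mono nonzero_mult_div_cancel_left)
  moreover have "n mod a < a" using False by simp
  ultimately have "n mod a \<le> (n div a) * b" using assms(1)
    by (metis dual_order.trans less_imp_le_nat mult_le_mono2 nat_mult_1_right less_one not_le)
  then have "(n div a) * a + n mod a \<in> semigroup_gen {a..a+b}" by (rule gen_mem)
  then show ?thesis by (metis div_mult_mod_eq)
qed

lemma all_above:
  fixes a b m :: nat
  assumes "0 < b" "2 * conductor (semigroup_gen {a..a+b}) - 1 \<le> m" "n \<ge> m"
  shows "n \<in> semigroup_gen {a..a+b}"
proof -
  let ?S = "semigroup_gen {a..a+b}"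
  have ex: "\<exists>c. c \<in> ?S \<and> (\<forall>n. c + n \<in> ?S)"
    using big_mem[OF assms(1)] by (intro exI[of _ "a*a"]) auto
  have c: "\<forall>n. conductor ?S + n \<in> ?S"
    unfolding conductor_def using LeastI_ex[OF ex] by blast
  show ?thesis
  proof (cases "conductor ?S = 0")
    case True then show ?thesis using c by (metis add_0)
  next
    case False
    then have "conductor ?S \<le> n" using assms by linarith
    then show ?thesis using c by (metis le_add_diff_inverse)
  qed
qed

theorem lemma4p20:
  fixes a b m r :: nat and M :: "nat set"
  assumes "0 < b" and "b < a"
    and "2 * conductor (semigroup_gen {a..a+b}) - 1 \<le> m"
    and "amenable (semigroup_gen {a..a+b}) m r M"
  shows "amenable (semigroup_gen {a..a+b}) (m + 1) r ((\<lambda>x. x + 1) ` M)"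
proof -
  let ?S = "semigroup_gen {a..a+b}"
  have A: "\<And>n. n \<ge> m \<Longrightarrow> n \<in> ?S" using all_above[OF assms(1) assms(3)] by blast
  from assms(4) have fin: "finite M" and cd: "card M = r" and mM: "m \<in> M"
    and mn: "\<forall>x\<in>M. m \<le> x" and D: "\<forall>x\<in>M. Dset ?S x \<inter> {m..} \<subseteq> M"
    and c0: "2 * conductor ?S - 1 \<le> m"
    unfolding amenable_def by auto
  have "card ((\<lambda>x. x + 1) ` M) = r" using cd by (simp add: card_image inj_on_def)
  moreover have "(\<lambda>x. x + 1) ` M \<subseteq> ?S" using mn A by auto
  moreover have "\<forall>y\<in>(\<lambda>x. x + 1) ` M. Dset ?S y \<inter> {m+1..} \<subseteq> (\<lambda>x. x + 1) ` M"
  proof (intro ballI subsetI)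
    fix y \<alpha> assume y: "y \<in> (\<lambda>x. x + 1) ` M" and al: "\<alpha> \<in> Dset ?S y \<inter> {m+1..}"
    then obtain x where x: "x \<in> M" "y = x + 1" by auto
    from al have a1: "\<alpha> \<le> x + 1" "x + 1 - \<alpha> \<in> ?S" "\<alpha> \<ge> m + 1"
      unfolding Dset_def using x by auto
    have "\<alpha> - 1 \<in> ?S" using A a1 by auto
    moreover have "x - (\<alpha> - 1) = x + 1 - \<alpha>" using a1 by auto
    ultimately have "\<alpha> - 1 \<in> Dset ?S x \<inter> {m..}" unfolding Dset_def using a1 by auto
    then have "\<alpha> - 1 \<in> M" using D x by blast
    moreover have "\<alpha> = (\<alpha> - 1) + 1" using a1 by auto
    ultimately show "\<alpha> \<in> (\<lambda>x. x + 1) ` M" by blast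
  qed
  ultimately show ?thesis unfolding amenable_def using fin mM mn c0 by auto
qed

end
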